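(* Let $\sigma_0\ge\sigma_1\ge\dots\ge\sigma_{r-1}>0$ with $\sum_{i=0}^{r-1}\sigma_i^2=1$ and $r\le\min(N_1-1,N_2-1)$. Then $$\sigma_0\sigma_1\,\mathbb{I}_{N_1N_2}+\sum_{i=0}^{r-1}\sum_{j=0}^{r-1}\sigma_i\sigma_j\,|i\rangle\langle j|\otimes|i\rangle\langle j|\in\mathrm{SEP}_{N_1\otimes N_2}.$$
   Context: $\mathrm{SEP}_{N_1\otimes N_2}$ is the cone of separable matrices on $\mathbb{C}^{N_1}\otimes\mathbb{C}^{N_2}$, i.e. matrices of the form $\sum_i\lambda_i|x_i\rangle\langle x_i|\otimes|y_i\rangle\langle y_i|$ with $\lambda_i\ge0$. $\{|i\rangle\}$ is the computational basis. *)

theory Defs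
  imports Complex_Main
begin

text \<open>Matrices on C^N1 (x) C^N2 are represented as functions of index pairs:
  A (a,b) (c,d) is the entry in row |a>|b>, column |c>|d>, meaningful for
  a,c < N1 and b,d < N2. Vectors of C^N are functions nat => complex,
  meaningful on indices < N.\<close>

type_synonym bimat = "(nat \<times> nat) \<Rightarrow> (nat \<times> nat) \<Rightarrow> complex"

definition ketbra :: "nat \<Rightarrow> nat \<Rightarrow> nat \<Rightarrow> nat \<Rightarrow> complex" where
  "ketbra i j a c = (if a = i \<and> c = j then 1 else 0)"

definition proj :: "(nat \<Rightarrow> complex) \<Rightarrow> nat \<Rightarrow> nat \<Rightarrow> complex" where
  "proj x a c = x a * cnj (x c)"

definition tensor :: "(nat \<Rightarrow> nat \<Rightarrow> complex) \<Rightarrow> (nat \<Rightarrow> nat \<Rightarrow> complex) \<Rightarrow> bimat" where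
  "tensor A B = (\<lambda>(a,b) (c,d). A a c * B b d)"

definition idm :: bimat where
  "idm = (\<lambda>p q. if p = q then 1 else 0)"

definition eq_on :: "nat \<Rightarrow> nat \<Rightarrow> bimat \<Rightarrow> bimat \<Rightarrow> bool" where
  "eq_on N1 N2 A B = (\<forall>a b c d. a < N1 \<longrightarrow> b < N2 \<longrightarrow> c < N1 \<longrightarrow> d < N2 \<longrightarrow>
      A (a,b) (c,d) = B (a,b) (c,d))"

definition SEP :: "nat \<Rightarrow> nat \<Rightarrow> bimat set" where
  "SEP N1 N2 = {A. \<exists>(m::nat) (lam::nat \<Rightarrow> real) (x::nat \<Rightarrow> nat \<Rightarrow> complex) (y::nat \<Rightarrow> nat \<Rightarrow> complex).
      (\<forall>k<m. lam k \<ge> 0) \<and>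
      eq_on N1 N2 A (\<lambda>p q. \<Sum>k<m. complex_of_real (lam k) * tensor (proj (x k)) (proj (y k)) p q)}"

end

theory Submission imports Defs begin

lemma char_sum:
  fixes k :: int and m :: nat
  assumes m: "m > 0" and k: "\<bar>k\<bar> < int m"
  shows "(\<Sum>s<m. cis (2*pi*of_int k/real m) ^ s) = (if k = 0 then of_nat m else 0)"
proof (cases "k = 0")
  case True then show ?thesis by simp
next
  case False
  let ?z = "cis (2*pi*of_int k/real m)"
  have "?z \<noteq> 1"
  proof
    assume "?z = 1"
    then have "cos (2*pi*of_int k/real m) = 1" by (metis cis.sel(1) one_complex.sel(1))
    then obtain n :: int where n: "2*pi*of_int k/real m = of_int n * 2 * pi"
      using cos_one_2pi_int by blast
    then have "real_of_int k = of_int n * real m" using m by (simp add: field_simps)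
    then have "k = n * int m" by (metis of_int_eq_iff of_int_mult of_int_of_nat_eq)
    with False k show False
    proof -
      have "n \<noteq> 0" using False \<open>k = n * int m\<close> by simp
      then have "\<bar>n\<bar> \<ge> 1" by simp
      then have "\<bar>k\<bar> \<ge> int m" using \<open>k = n * int m\<close> by (simp add: abs_mult mult_le_cancel_right1)
      with k show False by simp
    qed
  qed
  moreover have "?z ^ m = 1"
  proof -
    have "?z ^ m = cis (2*pi*of_int k)" using m by (simp add: DeMoivre)
    also have "\<dots> = 1" by (rule cis_multiple_2pi) simp
    finally show ?thesis .
  qed
  ultimately show ?thesis using False by (simp add: geometric_sum)
qed

lemma sep_zero: "(\<lambda>p q. 0) \<in> SEP N1 N2"
  unfolding SEP_def eq_on_def by (rule CollectI, rule exI[of _ 0]) auto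

lemma sep_insert:
  assumes "A \<in> SEP N1 N2" and "l \<ge> 0"
  shows "(\<lambda>p q. A p q + complex_of_real l * tensor (proj u) (proj v) p q) \<in> SEP N1 N2"
proof -
  from assms(1) obtain m lam x y where lam: "\<forall>k<(m::nat). lam k \<ge> 0" and
    eq: "eq_on N1 N2 A (\<lambda>p q. \<Sum>k<m. complex_of_real (lam k) * tensor (proj (x k)) (proj (y k)) p q)"
    unfolding SEP_def mem_Collect_eq by blast
  let ?lam = "lam(m := l)" and ?x = "x(m := u)" and ?y = "y(m := v)"
  have s: "(\<Sum>k<m. complex_of_real (?lam k) * tensor (proj (?x k)) (proj (?y k)) p q)
        = (\<Sum>k<m. complex_of_real (lam k) * tensor (proj (x k)) (proj (y k)) p q)" for p q
    by (rule sum.cong) auto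
  show ?thesis unfolding SEP_def
    apply (rule CollectI)
    apply (rule exI[of _ "Suc m"], rule exI[of _ ?lam], rule exI[of _ ?x], rule exI[of _ ?y])
    using lam assms(2) eq s unfolding eq_on_def by (auto simp: less_Suc_eq)
qed

lemma sep_sum:
  assumes "A \<in> SEP N1 N2" and "finite S" and "\<forall>k\<in>S. l k \<ge> 0"
  shows "(\<lambda>p q. A p q + (\<Sum>k\<in>S. complex_of_real (l k) * tensor (proj (u k)) (proj (v k)) p q)) \<in> SEP N1 N2"
  using assms(2,3)
proof (induction S rule: finite_induct)
  case empty then show ?case using assms(1) by simp
next
  case (insert a S)
  then have "(\<lambda>p q. (A p q + (\<Sum>k\<in>S. complex_of_real (l k) * tensor (proj (u k)) (proj (v k)) p q))
     + complex_of_real (l a) * tensor (proj (u a)) (proj (v a)) p q) \<in> SEP N1 N2"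
    by (intro sep_insert[where A = "\<lambda>p q. A p q + _ p q"]) auto
  then show ?case using insert by (simp add: add_ac)
qed

lemma sep_eq:
  assumes "eq_on N1 N2 A B" and "B \<in> SEP N1 N2" shows "A \<in> SEP N1 N2"
  using assms unfolding SEP_def eq_on_def by auto

lemma int_sidon:
  fixes a b c d :: nat
  shows "(int a - int c - int b + int d = 0 \<and> int a^2 - int c^2 - int b^2 + int d^2 = 0)
     \<longleftrightarrow> ((a = b \<and> c = d) \<or> (a = c \<and> b = d))"
proof
  assume h: "int a - int c - int b + int d = 0 \<and> int a^2 - int c^2 - int b^2 + int d^2 = 0"
  then have e1: "int a - int b = int c - int d" by simp
  from h have "(int a - int b) * (int a + int b) = (int c - int d) * (int c + int d)"
    by (simp add: algebra_simps power2_eq_square)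
  with e1 have "int a = int b \<or> int a + int b = int c + int d" by auto
  with e1 show "(a = b \<and> c = d) \<or> (a = c \<and> b = d)" by auto
qed auto

definition ph :: "nat \<Rightarrow> nat \<Rightarrow> nat \<Rightarrow> nat \<Rightarrow> real" where
  "ph m s u a = 2*pi*(real s * real a + real u * (real a)^2)/real m"

definition X :: "(nat \<Rightarrow> real) \<Rightarrow> nat \<Rightarrow> nat \<Rightarrow> nat \<Rightarrow> nat \<Rightarrow> complex" where
  "X \<sigma> m s u a = complex_of_real (sqrt (\<sigma> a)) * cis (ph m s u a)"

definition Y :: "(nat \<Rightarrow> real) \<Rightarrow> nat \<Rightarrow> nat \<Rightarrow> nat \<Rightarrow> nat \<Rightarrow> complex" where
  "Y \<sigma> m s u a = complex_of_real (sqrt (\<sigma> a)) * cis (- ph m s u a)"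

lemma termF:
  "tensor (proj (X \<sigma> m s u)) (proj (Y \<sigma> m s u)) (a,b) (c,d)
   = complex_of_real (sqrt (\<sigma> a) * sqrt (\<sigma> b) * sqrt (\<sigma> c) * sqrt (\<sigma> d))
     * cis (2*pi*of_int (int a - int c - int b + int d)/real m) ^ s
     * cis (2*pi*of_int (int a^2 - int c^2 - int b^2 + int d^2)/real m) ^ u"
proof -
  have arg: "ph m s u a + - ph m s u c + (- ph m s u b + ph m s u d)
     = real s * (2*pi*of_int (int a - int c - int b + int d)/real m)
       + real u * (2*pi*of_int (int a^2 - int c^2 - int b^2 + int d^2)/real m)"
    unfolding ph_def by (simp add: add_divide_distrib diff_divide_distrib algebra_simps)
  have r: "cis (2*pi*of_int (int a - int c - int b + int d)/real m) ^ s
     * cis (2*pi*of_int (int a^2 - int c^2 - int b^2 + int d^2)/real m) ^ u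
     = cis (ph m s u a + - ph m s u c + (- ph m s u b + ph m s u d))"
    unfolding arg DeMoivre cis_mult ..
  have l: "tensor (proj (X \<sigma> m s u)) (proj (Y \<sigma> m s u)) (a,b) (c,d)
     = complex_of_real (sqrt (\<sigma> a) * sqrt (\<sigma> b) * sqrt (\<sigma> c) * sqrt (\<sigma> d))
       * (cis (ph m s u a) * cis (- ph m s u c) * (cis (- ph m s u b) * cis (ph m s u d)))"
    unfolding tensor_def proj_def X_def Y_def by (simp add: cis_cnj mult_ac)
  have c: "cis (ph m s u a) * cis (- ph m s u c) * (cis (- ph m s u b) * cis (ph m s u d))
      = cis (ph m s u a + - ph m s u c + (- ph m s u b + ph m s u d))"
    by (simp only: cis_mult)
  show ?thesis unfolding l c r[symmetric] by (simp only: mult.assoc)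
qed


lemma Fval:
  assumes zero: "\<And>i. r \<le> i \<Longrightarrow> \<sigma> i = 0" and m: "m = 2*r^2+1"
  shows "(\<Sum>k\<in>{..<m}\<times>{..<m}. complex_of_real (1/(real m)^2) *
      tensor (proj (X \<sigma> m (fst k) (snd k))) (proj (Y \<sigma> m (fst k) (snd k))) (a,b) (c,d))
    = (if a<r \<and> b<r \<and> c<r \<and> d<r \<and> ((a=b \<and> c=d) \<or> (a=c \<and> b=d))
       then complex_of_real (sqrt (\<sigma> a) * sqrt (\<sigma> b) * sqrt (\<sigma> c) * sqrt (\<sigma> d)) else 0)"
proof -
  define P where "P = sqrt (\<sigma> a) * sqrt (\<sigma> b) * sqrt (\<sigma> c) * sqrt (\<sigma> d)"
  define k1 where "k1 = int a - int c - int b + int d"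
  define k2 where "k2 = int a^2 - int c^2 - int b^2 + int d^2"
  define z1 where "z1 = cis (2*pi*of_int k1/real m)"
  define z2 where "z2 = cis (2*pi*of_int k2/real m)"
  have mpos: "m > 0" using m by simp
  have "(\<Sum>k\<in>{..<m}\<times>{..<m}. complex_of_real (1/(real m)^2) *
      tensor (proj (X \<sigma> m (fst k) (snd k))) (proj (Y \<sigma> m (fst k) (snd k))) (a,b) (c,d))
    = (\<Sum>s<m. \<Sum>u<m. complex_of_real (1/(real m)^2) * complex_of_real P * (z1 ^ s * z2 ^ u))"
  proof -
    have t: "tensor (proj (X \<sigma> m s u)) (proj (Y \<sigma> m s u)) (a,b) (c,d)
       = complex_of_real P * (z1 ^ s * z2 ^ u)" for s u
      unfolding termF P_def z1_def z2_def k1_def k2_def by (simp only: mult.assoc)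
    show ?thesis unfolding t by (simp only: sum.cartesian_product case_prod_beta' mult.assoc)
  qed
  also have "\<dots> = complex_of_real (1/(real m)^2) * complex_of_real P * ((\<Sum>s<m. z1^s) * (\<Sum>u<m. z2^u))"
    by (subst sum_product) (simp only: sum_distrib_left)
  finally have S: "(\<Sum>k\<in>{..<m}\<times>{..<m}. complex_of_real (1/(real m)^2) *
      tensor (proj (X \<sigma> m (fst k) (snd k))) (proj (Y \<sigma> m (fst k) (snd k))) (a,b) (c,d))
    = complex_of_real (1/(real m)^2) * complex_of_real P * ((\<Sum>s<m. z1^s) * (\<Sum>u<m. z2^u))" .
  show ?thesis
  proof (cases "a<r \<and> b<r \<and> c<r \<and> d<r")
    case True
    have rr: "int r \<le> (int r)^2" by (metis of_nat_le_iff of_nat_power le_square power2_eq_square)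
    have sq: "int x^2 < int r^2" if "x < r" for x using that
      by (simp add: power_strict_mono)
    have mi: "int m = 2*(int r)^2+1" using m by simp
    have T: "int a < int r" "int b < int r" "int c < int r" "int d < int r" using True by auto
    have "\<bar>k1\<bar> < int m" unfolding k1_def abs_less_iff mi using T rr by linarith
    moreover have "\<bar>k2\<bar> < int m" unfolding k2_def abs_less_iff mi using True sq[of a] sq[of b] sq[of c] sq[of d]
        zero_le_power2[of "int a"] zero_le_power2[of "int b"] zero_le_power2[of "int c"] zero_le_power2[of "int d"]
      by linarith
    ultimately have "(\<Sum>s<m. z1^s) * (\<Sum>u<m. z2^u) = (if k1 = 0 \<and> k2 = 0 then of_nat m * of_nat m else 0)"
      unfolding z1_def z2_def using char_sum[OF mpos] by simp
    moreover have "complex_of_real (1/(real m)^2) * (of_nat m * of_nat m) = 1"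
      using mpos by (simp add: power2_eq_square field_simps)
    ultimately show ?thesis using True int_sidon[of a c b d] unfolding S P_def k1_def k2_def
      by (auto simp: mult_ac)
  next
    case False
    then have "P = 0" unfolding P_def using zero by auto
    then show ?thesis unfolding S using False by auto
  qed
qed


lemma Mval:
  "(\<Sum>i<r. \<Sum>j<r. complex_of_real (\<sigma> i * \<sigma> j) * tensor (ketbra i j) (ketbra i j) (a,b) (c,d))
   = (if a = b \<and> c = d \<and> a < r \<and> c < r then complex_of_real (\<sigma> a * \<sigma> c) else 0)"
proof -
  have t: "complex_of_real (\<sigma> i * \<sigma> j) * tensor (ketbra i j) (ketbra i j) (a,b) (c,d)
     = (if j = c then (if i = a then (if a = b \<and> c = d then complex_of_real (\<sigma> a * \<sigma> c) else 0) else 0) else 0)"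
    for i j unfolding tensor_def ketbra_def by auto
  have inner: "(\<Sum>j<r. (if j = c then (if i = a then (if a = b \<and> c = d then complex_of_real (\<sigma> a * \<sigma> c) else 0) else 0) else 0))
     = (if i = a then (if c < r \<and> a = b \<and> c = d then complex_of_real (\<sigma> a * \<sigma> c) else 0) else 0)" for i
    by (subst sum.delta) auto
  show ?thesis unfolding t inner by (subst sum.delta) auto
qed

lemma Gval:
  assumes "a < N1" "b < N2"
  shows "(\<Sum>k\<in>{..<N1}\<times>{..<N2}. complex_of_real (cc (fst k) (snd k)) *
      tensor (proj (\<lambda>x. if x = fst k then 1 else 0)) (proj (\<lambda>x. if x = snd k then 1 else 0)) (a,b) (c,d))
   = (if a = c \<and> b = d then complex_of_real (cc a b) else 0)"
proof -
  have t: "complex_of_real (cc (fst k) (snd k)) *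
      tensor (proj (\<lambda>x. if x = fst k then 1 else 0)) (proj (\<lambda>x. if x = snd k then 1 else 0)) (a,b) (c,d)
     = (if (a,b) = k then (if a = c \<and> b = d then complex_of_real (cc a b) else 0) else 0)" for k
    unfolding tensor_def proj_def by (cases k) auto
  show ?thesis unfolding t using assms by (simp add: sum.delta)
qed


theorem lemma6:
  fixes N1 N2 r :: nat and \<sigma> :: "nat \<Rightarrow> real"
  assumes mono: "\<And>i j. i \<le> j \<Longrightarrow> j < r \<Longrightarrow> \<sigma> j \<le> \<sigma> i"
    and pos: "\<And>i. i < r \<Longrightarrow> \<sigma> i > 0"
    and zero: "\<And>i. r \<le> i \<Longrightarrow> \<sigma> i = 0"
    and norm: "(\<Sum>i<r. (\<sigma> i)\<^sup>2) = 1"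
    and r1: "r \<le> N1 - 1" and r2: "r \<le> N2 - 1"
  shows "(\<lambda>p q. complex_of_real (\<sigma> 0 * \<sigma> 1) * idm p q
           + (\<Sum>i<r. \<Sum>j<r. complex_of_real (\<sigma> i * \<sigma> j) * tensor (ketbra i j) (ketbra i j) p q))
         \<in> SEP N1 N2"
proof -
  have r0: "r \<ge> 1"
  proof (rule ccontr)
    assume "\<not> r \<ge> 1" then have "r = 0" by simp
    with norm show False by simp
  qed
  have nn: "\<sigma> i \<ge> 0" for i
    using pos[of i] zero[of i] by (cases "i < r") auto
  have s01: "\<sigma> 0 * \<sigma> 1 \<ge> 0" using nn by simp
  have prod: "\<sigma> a * \<sigma> b \<le> \<sigma> 0 * \<sigma> 1" if "a \<noteq> b" for a b
  proof (cases "a < r \<and> b < r")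
    case False
    then have "\<sigma> a * \<sigma> b = 0" using zero by auto
    then show ?thesis using s01 by linarith
  next
    case True
    have main: "\<sigma> x * \<sigma> y \<le> \<sigma> 0 * \<sigma> 1" if "x < y" "y < r" for x y
    proof -
      have "\<sigma> x \<le> \<sigma> 0" using mono[of 0 x] that by simp
      moreover have "\<sigma> y \<le> \<sigma> 1" using mono[of 1 y] that by simp
      ultimately show ?thesis using nn by (simp add: mult_mono)
    qed
    show ?thesis
    proof (cases "a < b")
      case True then show ?thesis using main \<open>a < r \<and> b < r\<close> by auto
    next
      case False
      then have "b < a" using that by simp
      then show ?thesis using main[of b a] \<open>a < r \<and> b < r\<close> by (simp add: mult.commute)
    qed
  qed
  define m where "m = 2*r^2+1"
  define cc where "cc i j = \<sigma> 0 * \<sigma> 1 - (if i \<noteq> j then \<sigma> i * \<sigma> j else 0)" for i j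
  have ccnn: "cc i j \<ge> 0" for i j unfolding cc_def using prod[of i j] s01 by auto
  define F where "F = (\<lambda>p q. 0 + (\<Sum>k\<in>{..<m}\<times>{..<m}. complex_of_real (1/(real m)^2) *
      tensor (proj (X \<sigma> m (fst k) (snd k))) (proj (Y \<sigma> m (fst k) (snd k))) p q))"
  have FS: "F \<in> SEP N1 N2" unfolding F_def
    by (rule sep_sum[OF sep_zero, where S = "{..<m}\<times>{..<m}" and l = "\<lambda>k. 1/(real m)^2"
        and u = "\<lambda>k. X \<sigma> m (fst k) (snd k)" and v = "\<lambda>k. Y \<sigma> m (fst k) (snd k)"]) auto
  define G where "G = (\<lambda>p q. F p q + (\<Sum>k\<in>{..<N1}\<times>{..<N2}. complex_of_real (cc (fst k) (snd k)) *
      tensor (proj (\<lambda>x. if x = fst k then 1 else 0)) (proj (\<lambda>x. if x = snd k then 1 else 0)) p q))"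
  have GS: "G \<in> SEP N1 N2" unfolding G_def
    by (rule sep_sum[OF FS, where S = "{..<N1}\<times>{..<N2}" and l = "\<lambda>k. cc (fst k) (snd k)"
        and u = "\<lambda>k x. if x = fst k then 1 else 0" and v = "\<lambda>k x. if x = snd k then 1 else 0"])
      (auto simp: ccnn)
  show ?thesis
  proof (rule sep_eq[OF _ GS], unfold eq_on_def, intro allI impI)
    fix a b c d assume ab: "a < N1" "b < N2" "c < N1" "d < N2"
    have sq: "sqrt (\<sigma> x) * sqrt (\<sigma> x) = \<sigma> x" for x using nn[of x] by simp
    have Fv: "F (a,b) (c,d) = (if a<r \<and> b<r \<and> c<r \<and> d<r \<and> ((a=b \<and> c=d) \<or> (a=c \<and> b=d))
       then complex_of_real (sqrt (\<sigma> a) * sqrt (\<sigma> b) * sqrt (\<sigma> c) * sqrt (\<sigma> d)) else 0)"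
      unfolding F_def using Fval[OF zero m_def] by simp
    have Fv2: "F (a,b) (c,d) = (if a<r \<and> c<r \<and> a=b \<and> c=d then complex_of_real (\<sigma> a * \<sigma> c)
        else if a<r \<and> b<r \<and> a=c \<and> b=d then complex_of_real (\<sigma> a * \<sigma> b) else 0)"
    proof (cases "a=b \<and> c=d")
      case True
      have "sqrt (\<sigma> a) * sqrt (\<sigma> b) * sqrt (\<sigma> c) * sqrt (\<sigma> d) = \<sigma> a * \<sigma> c"
        using True sq[of a] sq[of c] by (simp add: mult_ac)
      then show ?thesis unfolding Fv using True by auto
    next
      case False
      have "sqrt (\<sigma> a) * sqrt (\<sigma> b) * sqrt (\<sigma> c) * sqrt (\<sigma> d) = \<sigma> a * \<sigma> b" if "a=c" "b=d"
        using that sq[of a] sq[of b] by (simp add: mult_ac)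
      then show ?thesis unfolding Fv using False by auto
    qed
    have Gv: "G (a,b) (c,d) = F (a,b) (c,d) + (if a = c \<and> b = d then complex_of_real (cc a b) else 0)"
      unfolding G_def using Gval[OF ab(1,2), of cc c d] by simp
    show "complex_of_real (\<sigma> 0 * \<sigma> 1) * idm (a, b) (c, d) +
         (\<Sum>i<r. \<Sum>j<r. complex_of_real (\<sigma> i * \<sigma> j) * tensor (ketbra i j) (ketbra i j) (a, b) (c, d)) =
         G (a, b) (c, d)"
      unfolding Gv Mval Fv2 idm_def cc_def
      using zero[of a] zero[of b] zero[of c] zero[of d]
      by (auto simp: mult_ac)
  qed
qed

end
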